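(* Let $f,g:\mathbb{N}\to\mathbb{N}$ be functions with $n^{2}=o(f(n))$ and $g(n)=o(n^{3})$ as $n\to\infty$, and let $l:\mathbb{N}\to\mathbb{N}$ satisfy $f(n)\le l(n)\le g(n)$ for every $n\in\mathbb{N}$. Then there exists a function $h:\mathbb{N}\to\mathbb{N}$ with $h(n)\sim \frac{5\,l(n)^{2}}{\alpha_n}$ as $n\to\infty$ such that for every $n\in\mathbb{N}$ $$\frac{l(n)^{2}}{\alpha_n}\le r(l(n))\le h(n).$$
   Context: For $n\in\mathbb{N}$ let $G_n=G(n,3,1)$ be the graph whose vertex set $V_n$ consists of all $3$-element subsets of $\{1,\dots,n\}$, two vertices being adjacent if and only if the corresponding sets share exactly one element. Let $\alpha_n$ denote the independence number of $G(n,3,1)$. For $W\subseteq V_n$ let $r(W)$ be the number of edges of $G(n,3,1)$ with both endpoints in $W$, and for an integer $0\le l\le \binom{n}{3}$ let $r(l)=\min\{r(W): W\subseteq V_n,\ |W|=l\}$ (so $r(l(n))$ is computed in $G(n,3,1)$). *)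

theory Defs
  imports Complex_Main "HOL-Library.Landau_Symbols"
begin

definition V31 :: "nat \<Rightarrow> nat set set" where
  "V31 n = {A. A \<subseteq> {1..n} \<and> card A = 3}"

definition adj31 :: "nat set \<Rightarrow> nat set \<Rightarrow> bool" where
  "adj31 A B \<longleftrightarrow> card (A \<inter> B) = 1"

definition alpha31 :: "nat \<Rightarrow> nat" where
  "alpha31 n = Max {card S | S. S \<subseteq> V31 n \<and> (\<forall>A\<in>S. \<forall>B\<in>S. \<not> adj31 A B)}"

definition rW31 :: "nat set set \<Rightarrow> nat" where
  "rW31 W = card {{A, B} | A B. A \<in> W \<and> B \<in> W \<and> adj31 A B}"

definition r31 :: "nat \<Rightarrow> nat \<Rightarrow> nat" where
  "r31 n l = Min {rW31 W | W. W \<subseteq> V31 n \<and> card W = l}"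

end

theory Submission
  imports Defs
begin


definition dg :: "nat set set \<Rightarrow> nat \<Rightarrow> nat" where
  "dg S x = card {U\<in>S. x \<in> U}"

lemma shape:
  assumes "card T = 3" "card U = 3" "U \<noteq> T" "U \<inter> T \<noteq> {}" "\<not> adj31 U T"
  shows "\<exists>y z. y \<in> T \<and> z \<notin> T \<and> U = insert z (T - {y})"
proof -
  have fT: "finite T" "finite U" using assms(1,2) by (auto intro: card_ge_0_finite)
  have c1: "card (U \<inter> T) \<noteq> 1" using assms(5) by (simp add: adj31_def)
  have c0: "card (U \<inter> T) \<noteq> 0" using assms(4) fT by simp
  have c3: "card (U \<inter> T) \<noteq> 3"
  proof
    assume "card (U \<inter> T) = 3"
    then have "U \<inter> T = U" using fT assms(2) by (metis Int_lower1 card_subset_eq)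
    moreover have "U \<inter> T = T" using fT assms(1) \<open>card (U \<inter> T) = 3\<close> by (metis Int_lower2 card_subset_eq)
    ultimately show False using assms(3) by simp
  qed
  have "card (U \<inter> T) \<le> 3" using fT assms(2) by (metis card_mono inf_le1)
  then have c2: "card (U \<inter> T) = 2" using c0 c1 c3 by linarith
  have "card (U - T) = 1" using fT assms(2) c2 by (simp add: card_Diff_subset_Int)
  then obtain z where z: "U - T = {z}" by (auto simp: card_Suc_eq)
  have "card (T - U) = 1" using fT assms(1) c2 by (simp add: card_Diff_subset_Int Int_commute)
  then obtain y where y: "T - U = {y}" by (auto simp: card_Suc_eq)
  have "U = insert z (T - {y})" using z y by blast
  moreover have "y \<in> T" "z \<notin> T" using y z by auto
  ultimately show ?thesis by blast
qed

lemma key: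
  assumes "card T = 3" "y \<in> T" "y' \<in> T" "y \<noteq> y'" "z \<notin> T" "z' \<notin> T"
    "\<not> adj31 (insert z (T - {y})) (insert z' (T - {y'}))"
  shows "z = z'"
proof (rule ccontr)
  assume "z \<noteq> z'"
  then have "insert z (T - {y}) \<inter> insert z' (T - {y'}) = T - {y,y'}" using assms(5,6) by auto
  moreover have "card (T - {y,y'}) = 1" using assms(1-4)
    by (subst card_Diff_subset) (auto intro: card_ge_0_finite)
  ultimately show False using assms(7) by (simp add: adj31_def)
qed

lemma V31_fin: "finite (V31 n)"
proof -
  have "V31 n \<subseteq> Pow {1..n}" by (auto simp: V31_def)
  then show ?thesis by (rule finite_subset) simp
qed

lemma V31_card: "A \<in> V31 n \<Longrightarrow> card A = 3" by (simp add: V31_def)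
lemma V31_sub: "A \<in> V31 n \<Longrightarrow> A \<subseteq> {1..n}" by (simp add: V31_def)

lemma small_count:
  assumes "card T = 3" "x \<in> T"
  shows "card {U. U \<subseteq> insert w T \<and> x \<in> U \<and> card U = 3} \<le> 3"
proof -
  have fT: "finite T" using assms(1) by (auto intro: card_ge_0_finite)
  have "{U. U \<subseteq> insert w T \<and> x \<in> U \<and> card U = 3} \<subseteq> insert x ` {P. P \<subseteq> insert w T - {x} \<and> card P = 2}"
  proof
    fix U assume U: "U \<in> {U. U \<subseteq> insert w T \<and> x \<in> U \<and> card U = 3}"
    then have "U = insert x (U - {x})" by auto
    moreover have "U - {x} \<subseteq> insert w T - {x}" using U by auto
    moreover have "card (U - {x}) = 2" using U by simp
    ultimately show "U \<in> insert x ` {P. P \<subseteq> insert w T - {x} \<and> card P = 2}" by blast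
  qed
  note sb = this
  have "card {U. U \<subseteq> insert w T \<and> x \<in> U \<and> card U = 3} \<le> card (insert x ` {P. P \<subseteq> insert w T - {x} \<and> card P = 2})"
  proof -
    have "{P. P \<subseteq> insert w T - {x} \<and> card P = 2} \<subseteq> Pow (insert w T - {x})" by blast
    moreover have "finite (Pow (insert w T - {x}))" using fT by simp
    ultimately have "finite {P. P \<subseteq> insert w T - {x} \<and> card P = 2}" by (rule finite_subset)
    then have "finite (insert x ` {P. P \<subseteq> insert w T - {x} \<and> card P = 2})" by (rule finite_imageI)
    then show ?thesis using sb by (rule card_mono)
  qed
  also have "\<dots> \<le> card {P. P \<subseteq> insert w T - {x} \<and> card P = 2}" by (rule card_image_le) (rule finite_subset[of _ "Pow (insert w T - {x})"], blast, simp add: fT)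
  also have "\<dots> = card (insert w T - {x}) choose 2" by (rule n_subsets) (simp add: fT)
  also have "\<dots> \<le> 3 choose 2"
  proof -
    have "card (insert w T) \<le> 4" using assms fT by (simp add: card_insert_if)
    then have "card (insert w T - {x}) \<le> 3" using assms fT by (simp add: card_Diff_singleton)
    then show ?thesis by (rule binomial_right_mono)
  qed
  also have "\<dots> = 3" by (simp add: choose_two)
  finally show ?thesis .
qed

definition indep :: "nat set set \<Rightarrow> bool" where
  "indep S \<longleftrightarrow> (\<forall>A\<in>S. \<forall>B\<in>S. \<not> adj31 A B)"

lemma weight:
  assumes S: "S \<subseteq> V31 n" "indep S" and T: "T \<in> S"
  shows "(\<Sum>x\<in>T. 1 / real (dg S x)) \<ge> 1"
proof -
  have fS: "finite S" using S V31_fin finite_subset by blast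
  have cT: "card T = 3" using S T V31_card by blast
  have fT: "finite T" using cT by (auto intro: card_ge_0_finite)
  have dpos: "dg S x \<ge> 1" if "x \<in> T" for x
  proof -
    have "T \<in> {U\<in>S. x \<in> U}" using T that by simp
    then have "{U\<in>S. x \<in> U} \<noteq> {}" by blast
    then show ?thesis unfolding dg_def using fS by (simp add: Suc_le_eq card_gt_0_iff)
  qed
  have shp: "\<exists>y z. y \<in> T \<and> z \<notin> T \<and> U = insert z (T - {y})" if "U \<in> S" "U \<noteq> T" "U \<inter> T \<noteq> {}" for U
  proof -
    have "card U = 3" using that(1) S(1) V31_card by blast
    moreover have "\<not> adj31 U T" using that(1) T S(2) unfolding indep_def by blast
    ultimately show ?thesis using shape[OF cT _ that(2,3)] by blast
  qed
  have nadj: "\<not> adj31 U U'" if "U \<in> S" "U' \<in> S" for U U' using that S unfolding indep_def by blast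
  show ?thesis
  proof (cases "\<exists>y\<in>T. \<forall>U\<in>S. y \<in> U \<longrightarrow> U = T")
    case True
    then obtain y where y: "y \<in> T" "\<forall>U\<in>S. y \<in> U \<longrightarrow> U = T" by blast
    have "{U\<in>S. y \<in> U} = {T}" using y T by blast
    then have "dg S y = 1" by (simp add: dg_def)
    then have "1 = 1 / real (dg S y)" by simp
    also have "\<dots> \<le> (\<Sum>x\<in>T. 1 / real (dg S x))"
      by (rule member_le_sum) (simp_all add: y fT)
    finally show ?thesis .
  next
    case False
    then have ex: "\<forall>y\<in>T. \<exists>U\<in>S. y \<in> U \<and> U \<noteq> T" by auto
    obtain a where a: "a \<in> T" using cT by (metis card.empty ex_in_conv zero_neq_numeral)
    obtain U1 where U1: "U1 \<in> S" "a \<in> U1" "U1 \<noteq> T" using ex a by blast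
    obtain y1 z1 where yz1: "y1 \<in> T" "z1 \<notin> T" "U1 = insert z1 (T - {y1})" using shp[OF U1(1,3)] U1 a by blast
    obtain U2 where U2: "U2 \<in> S" "y1 \<in> U2" "U2 \<noteq> T" using ex yz1 by blast
    obtain y2 z2 where yz2: "y2 \<in> T" "z2 \<notin> T" "U2 = insert z2 (T - {y2})" using shp[OF U2(1,3)] U2 yz1 by blast
    have "y1 \<noteq> y2" using yz2 U2(2) yz1(1,2) by auto
    have "z1 = z2" using key[OF cT yz1(1) yz2(1) \<open>y1 \<noteq> y2\<close> yz1(2) yz2(2)] nadj[OF U1(1) U2(1)] yz1 yz2 by simp
    have sub: "U \<subseteq> insert z1 T" if UU: "U \<in> S" "U \<inter> T \<noteq> {}" for U
    proof (cases "U = T")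
      case True then show ?thesis by auto
    next
      case False
      obtain y z where yz: "y \<in> T" "z \<notin> T" "U = insert z (T - {y})" using shp[OF UU(1) False UU(2)] by blast
      have "z = z1"
      proof (cases "y = y1")
        case True
        then have "y \<noteq> y2" using \<open>y1 \<noteq> y2\<close> by simp
        then have "z = z2" using key[OF cT yz(1) yz2(1) _ yz(2) yz2(2)] nadj[OF UU(1) U2(1)] yz yz2 by simp
        then show ?thesis using \<open>z1 = z2\<close> by simp
      next
        case False
        then show ?thesis using key[OF cT yz(1) yz1(1) _ yz(2) yz1(2)] nadj[OF UU(1) U1(1)] yz yz1 by simp
      qed
      then show ?thesis using yz by auto
    qed
    have d3: "dg S x \<le> 3" if "x \<in> T" for x
    proof -
      have "{U\<in>S. x \<in> U} \<subseteq> {U. U \<subseteq> insert z1 T \<and> x \<in> U \<and> card U = 3}"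
      proof
        fix U assume U: "U \<in> {U\<in>S. x \<in> U}"
        then have "U \<inter> T \<noteq> {}" using that by blast
        then have "U \<subseteq> insert z1 T" using sub U by blast
        moreover have "card U = 3" using U S(1) V31_card by blast
        ultimately show "U \<in> {U. U \<subseteq> insert z1 T \<and> x \<in> U \<and> card U = 3}" using U by blast
      qed
      then have "dg S x \<le> card {U. U \<subseteq> insert z1 T \<and> x \<in> U \<and> card U = 3}"
      proof -
        have "{U. U \<subseteq> insert z1 T \<and> x \<in> U \<and> card U = 3} \<subseteq> Pow (insert z1 T)" by blast
        moreover have "finite (Pow (insert z1 T))" using fT by simp
        ultimately have "finite {U. U \<subseteq> insert z1 T \<and> x \<in> U \<and> card U = 3}" by (rule finite_subset)
        then show ?thesis unfolding dg_def using \<open>{U\<in>S. x \<in> U} \<subseteq> _\<close> by (rule card_mono)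
      qed
      also have "\<dots> \<le> 3" by (rule small_count[OF cT that])
      finally show ?thesis .
    qed
    have "(\<Sum>x\<in>T. 1 / (3::real)) = real (card T) * (1/3)" by (rule sum_constant)
    then have "1 = (\<Sum>x\<in>T. 1 / (3::real))" using cT by simp
    also have "\<dots> \<le> (\<Sum>x\<in>T. 1 / real (dg S x))"
    proof (rule sum_mono)
      fix x assume "x \<in> T"
      then have "dg S x \<le> 3" "dg S x \<ge> 1" using d3[of x] dpos[of x] by blast+
      then show "1 / (3::real) \<le> 1 / real (dg S x)"
        by (simp add: field_simps)
    qed
    finally show ?thesis .
  qed
qed



lemma indep_card_le:
  assumes S: "S \<subseteq> V31 n" "indep S"
  shows "card S \<le> n"
proof -
  have fS: "finite S" using S V31_fin finite_subset by blast
  have "real (card S) = (\<Sum>T\<in>S. 1)" by simp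
  also have "\<dots> \<le> (\<Sum>T\<in>S. \<Sum>x\<in>T. 1 / real (dg S x))"
    by (rule sum_mono) (rule weight[OF S])
  also have "\<dots> = (\<Sum>T\<in>S. \<Sum>x\<in>{1..n}. if x \<in> T then 1 / real (dg S x) else 0)"
  proof (rule sum.cong[OF refl])
    fix T assume "T \<in> S"
    then have Tn: "T \<subseteq> {1..n}" using S V31_sub by blast
    have "(\<Sum>x\<in>{1..n}. if x \<in> T then 1 / real (dg S x) else 0) = (\<Sum>x\<in>{1..n} \<inter> T. 1 / real (dg S x))"
      by (simp add: sum.inter_restrict)
    also have "{1..n} \<inter> T = T" using Tn by blast
    finally show "(\<Sum>x\<in>T. 1 / real (dg S x)) = (\<Sum>x\<in>{1..n}. if x \<in> T then 1 / real (dg S x) else 0)" by simp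
  qed
  also have "\<dots> = (\<Sum>x\<in>{1..n}. \<Sum>T\<in>S. if x \<in> T then 1 / real (dg S x) else 0)"
    by (rule sum.swap)
  also have "\<dots> \<le> (\<Sum>x\<in>{1..n}. 1)"
  proof (rule sum_mono)
    fix x assume "x \<in> {1..n}"
    have "(\<Sum>T\<in>S. if x \<in> T then 1 / real (dg S x) else 0) = (\<Sum>T\<in>{T\<in>S. x \<in> T}. 1 / real (dg S x))"
      using fS by (rule sum.inter_filter[symmetric])
    also have "\<dots> = real (card {T\<in>S. x \<in> T}) * (1 / real (dg S x))" by (rule sum_constant)
    also have "card {T\<in>S. x \<in> T} = dg S x" unfolding dg_def by simp
    finally have e: "(\<Sum>T\<in>S. if x \<in> T then 1 / real (dg S x) else 0) = real (dg S x) * (1 / real (dg S x))" .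
    show "(\<Sum>T\<in>S. if x \<in> T then 1 / real (dg S x) else 0) \<le> 1"
      unfolding e by (cases "dg S x = 0") simp_all
  qed
  also have "\<dots> = real n" by simp
  finally show ?thesis by simp
qed

lemma alpha_set_fin: "finite {card S | S. S \<subseteq> V31 n \<and> (\<forall>A\<in>S. \<forall>B\<in>S. \<not> adj31 A B)}"
proof -
  have "{card S | S. S \<subseteq> V31 n \<and> (\<forall>A\<in>S. \<forall>B\<in>S. \<not> adj31 A B)} \<subseteq> {..n}"
    using indep_card_le unfolding indep_def by fastforce
  then show ?thesis using finite_subset by blast
qed

lemma alpha_le: "alpha31 n \<le> n"
proof -
  have ne: "{card S | S. S \<subseteq> V31 n \<and> (\<forall>A\<in>S. \<forall>B\<in>S. \<not> adj31 A B)} \<noteq> {}" by blast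
  show ?thesis unfolding alpha31_def
    using indep_card_le unfolding indep_def
    by (intro Max.boundedI[OF alpha_set_fin ne]) blast
qed

lemma alpha_ge: "alpha31 n \<ge> n div 3"
proof -
  define tr where "tr i = {3*i+1, 3*i+2, 3*i+3}" for i :: nat
  define S where "S = tr ` {..<n div 3}"
  have inj: "inj_on tr {..<n div 3}"
  proof (rule inj_onI)
    fix i j assume e: "tr i = tr j"
    have "3*i+1 \<in> tr i" by (simp add: tr_def)
    then have "3*i+1 \<in> tr j" by (simp only: e)
    then have "3*i+1 = 3*j+1 \<or> 3*i+1 = 3*j+2 \<or> 3*i+1 = 3*j+3" by (simp add: tr_def)
    then show "i = j" by presburger
  qed
  have cS: "card S = n div 3" unfolding S_def using inj by (simp add: card_image)
  have sub: "S \<subseteq> V31 n"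
  proof
    fix A assume "A \<in> S"
    then obtain i where i: "i < n div 3" "A = tr i" unfolding S_def by blast
    have "3*i+3 \<le> n" using i(1) by linarith
    then show "A \<in> V31 n" unfolding V31_def using i by (auto simp: tr_def)
  qed
  have ind: "\<forall>A\<in>S. \<forall>B\<in>S. \<not> adj31 A B"
  proof (intro ballI)
    fix A B assume "A \<in> S" "B \<in> S"
    then obtain i j where "A = tr i" "B = tr j" unfolding S_def by blast
    show "\<not> adj31 A B"
    proof (cases "i = j")
      case True then show ?thesis using \<open>A = tr i\<close> \<open>B = tr j\<close> by (simp add: adj31_def tr_def)
    next
      case False
      then have "tr i \<inter> tr j = {}" by (auto simp: tr_def)
      then show ?thesis using \<open>A = tr i\<close> \<open>B = tr j\<close> by (simp add: adj31_def)
    qed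
  qed
  have "card S \<in> {card S | S. S \<subseteq> V31 n \<and> (\<forall>A\<in>S. \<forall>B\<in>S. \<not> adj31 A B)}" using sub ind by blast
  then have "card S \<le> alpha31 n" unfolding alpha31_def by (rule Max_ge[OF alpha_set_fin])
  then show ?thesis using cS by simp
qed



definition Eo :: "nat set set \<Rightarrow> (nat set \<times> nat set) set" where
  "Eo W = {p \<in> W \<times> W. adj31 (fst p) (snd p)}"

lemma cardP: "finite X \<Longrightarrow> real (card {p\<in>X. P p}) = (\<Sum>p\<in>X. if P p then 1 else 0)"
proof -
  assume "finite X"
  then have "(\<Sum>p\<in>X. if P p then 1 else (0::real)) = (\<Sum>p\<in>{p\<in>X. P p}. 1)" by (rule sum.inter_filter[symmetric])
  then show ?thesis by simp
qed

lemma adj_irrefl: "card A = 3 \<Longrightarrow> \<not> adj31 A A" by (simp add: adj31_def)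

lemma Eo_card:
  assumes W: "W \<subseteq> V31 n"
  shows "card (Eo W) = 2 * rW31 W"
proof -
  have fW: "finite W" using W V31_fin finite_subset by blast
  define E where "E = {{A, B} | A B. A \<in> W \<and> B \<in> W \<and> adj31 A B}"
  define pc where "pc e = {p \<in> Eo W. {fst p, snd p} = e}" for e
  have fE: "finite E"
  proof -
    have "E \<subseteq> (\<lambda>p. {fst p, snd p}) ` (W \<times> W)"
    proof
      fix e assume "e \<in> E"
      then have "\<exists>A B. e = {A, B} \<and> A \<in> W \<and> B \<in> W \<and> adj31 A B" unfolding E_def by (simp only: mem_Collect_eq)
      then obtain A B where AB: "e = {A, B}" "A \<in> W" "B \<in> W" by (elim exE conjE)
      then have "e = (\<lambda>p. {fst p, snd p}) (A, B)" "(A, B) \<in> W \<times> W" by auto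
      then show "e \<in> (\<lambda>p. {fst p, snd p}) ` (W \<times> W)" by (rule image_eqI)
    qed
    then show ?thesis by (rule finite_subset) (simp add: fW)
  qed
  have U: "Eo W = (\<Union>e\<in>E. pc e)"
  proof
    show "(\<Union>e\<in>E. pc e) \<subseteq> Eo W" unfolding pc_def by blast
    show "Eo W \<subseteq> (\<Union>e\<in>E. pc e)"
    proof
      fix p assume p: "p \<in> Eo W"
      then have q: "fst p \<in> W" "snd p \<in> W" "adj31 (fst p) (snd p)" unfolding Eo_def by auto
      have "{fst p, snd p} \<in> E" unfolding E_def
        by (rule CollectI, rule exI[of _ "fst p"], rule exI[of _ "snd p"]) (simp add: q)
      moreover have "p \<in> pc {fst p, snd p}" unfolding pc_def using p by simp
      ultimately show "p \<in> (\<Union>e\<in>E. pc e)" by blast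
    qed
  qed
  have fEo: "finite (Eo W)" unfolding Eo_def by (rule finite_subset[of _ "W \<times> W"]) (auto simp: fW)
  have c2: "card (pc e) = 2" if "e \<in> E" for e
  proof -
    have "\<exists>A B. e = {A, B} \<and> A \<in> W \<and> B \<in> W \<and> adj31 A B" using that unfolding E_def by (simp only: mem_Collect_eq)
    then obtain A B where AB: "e = {A, B}" "A \<in> W" "B \<in> W" "adj31 A B" by (elim exE conjE)
    have "card A = 3" using AB(2) W V31_card by blast
    then have "A \<noteq> B" using AB(4) adj_irrefl by metis
    have "adj31 B A" using AB(4) by (simp add: adj31_def Int_commute)
    have "pc e = {(A, B), (B, A)}"
    proof
      show "pc e \<subseteq> {(A, B), (B, A)}"
      proof
        fix p assume "p \<in> pc e"
        then have "{fst p, snd p} = {A, B}" unfolding pc_def AB(1) by simp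
        then have "(fst p = A \<and> snd p = B) \<or> (fst p = B \<and> snd p = A)" by (simp add: doubleton_eq_iff)
        then show "p \<in> {(A, B), (B, A)}" by (cases p) simp
      qed
      have "(A, B) \<in> Eo W" "(B, A) \<in> Eo W" unfolding Eo_def using AB \<open>adj31 B A\<close> by simp_all
      then show "{(A, B), (B, A)} \<subseteq> pc e" unfolding pc_def AB(1) by (simp add: insert_commute)
    qed
    then show ?thesis using \<open>A \<noteq> B\<close> by simp
  qed
  have "card (Eo W) = (\<Sum>e\<in>E. card (pc e))" unfolding U
  proof (rule card_UN_disjoint[OF fE])
    show "\<forall>i\<in>E. finite (pc i)" unfolding pc_def using fEo by simp
    show "\<forall>i\<in>E. \<forall>j\<in>E. i \<noteq> j \<longrightarrow> pc i \<inter> pc j = {}" unfolding pc_def by blast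
  qed
  also have "\<dots> = (\<Sum>e\<in>E. 2)" using c2 by simp
  also have "\<dots> = 2 * card E" by simp
  finally show ?thesis unfolding rW31_def E_def by simp
qed

lemma adj_sum:
  assumes "A \<in> V31 n" "B \<in> V31 n"
  shows "(if adj31 A B then 1 else 0 :: real) = (\<Sum>x\<in>{1..n}. if A \<inter> B = {x} then 1 else 0)"
proof (cases "adj31 A B")
  case True
  then obtain x0 where x0: "A \<inter> B = {x0}" unfolding adj31_def by (auto simp: card_1_singleton_iff)
  have "x0 \<in> {1..n}" using x0 assms(1) V31_sub by blast
  have "(\<Sum>x\<in>{1..n}. if A \<inter> B = {x} then 1 else (0::real)) = (\<Sum>x\<in>{1..n}. if x = x0 then 1 else 0)"
    using x0 by (intro sum.cong) auto
  also have "\<dots> = 1" using \<open>x0 \<in> {1..n}\<close> by simp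
  finally show ?thesis using True by simp
next
  case False
  then have "\<forall>x. A \<inter> B \<noteq> {x}" unfolding adj31_def by auto
  then show ?thesis using False by simp
qed

lemma bad_card:
  assumes "A \<in> V31 n" "x \<in> A"
  shows "card {B \<in> V31 n. x \<in> B \<and> A \<inter> B \<noteq> {x}} \<le> 2 * n"
proof -
  have sub: "{B \<in> V31 n. x \<in> B \<and> A \<inter> B \<noteq> {x}} \<subseteq> (\<lambda>(y,z). {x,y,z}) ` ((A - {x}) \<times> {1..n})"
  proof
    fix B assume B: "B \<in> {B \<in> V31 n. x \<in> B \<and> A \<inter> B \<noteq> {x}}"
    then have "x \<in> A \<inter> B" using assms by blast
    then obtain y where y: "y \<in> A \<inter> B" "y \<noteq> x" using B by blast
    have cB: "card B = 3" "finite B" using B V31_card by (auto intro: card_ge_0_finite)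
    have "card (B - {x, y}) = 1" using cB y \<open>x \<in> A \<inter> B\<close> by (subst card_Diff_subset) auto
    then obtain z where z: "B - {x, y} = {z}" by (auto simp: card_1_singleton_iff)
    have "B = {x, y, z}" using z y \<open>x \<in> A \<inter> B\<close> by blast
    moreover have "z \<in> {1..n}" using z B V31_sub by blast
    ultimately show "B \<in> (\<lambda>(y,z). {x,y,z}) ` ((A - {x}) \<times> {1..n})" using y by force
  qed
  have fA: "finite A" "card A = 3" using assms V31_card by (auto intro: card_ge_0_finite)
  have "card {B \<in> V31 n. x \<in> B \<and> A \<inter> B \<noteq> {x}} \<le> card ((\<lambda>(y,z). {x,y,z}) ` ((A - {x}) \<times> {1..n}))"
    using sub by (rule card_mono[rotated]) (simp add: fA)
  also have "\<dots> \<le> card ((A - {x}) \<times> {1..n})" by (rule card_image_le) (simp add: fA)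
  also have "\<dots> = 2 * n" using fA assms(2) by (simp add: card_cartesian_product)
  finally show ?thesis .
qed



lemma cs_sum:
  fixes f :: "'a \<Rightarrow> real"
  assumes "finite I"
  shows "(\<Sum>i\<in>I. f i)^2 \<le> real (card I) * (\<Sum>i\<in>I. (f i)^2)"
proof -
  have "0 \<le> (\<Sum>i\<in>I. \<Sum>j\<in>I. (f i - f j)^2)" by (intro sum_nonneg) simp
  also have "(\<Sum>i\<in>I. \<Sum>j\<in>I. (f i - f j)^2) = (\<Sum>i\<in>I. \<Sum>j\<in>I. (f i)^2 + (f j)^2 - 2 * f i * f j)"
    by (simp add: power2_diff)
  also have "\<dots> = 2 * real (card I) * (\<Sum>i\<in>I. (f i)^2) - 2 * (\<Sum>i\<in>I. f i)^2"
    by (simp add: sum.distrib sum_subtractf sum_distrib_left sum_distrib_right power2_eq_square algebra_simps)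
  finally show ?thesis by simp
qed

lemma sum_deg:
  assumes W: "W \<subseteq> V31 n"
  shows "(\<Sum>x\<in>{1..n}. real (dg W x)) = 3 * real (card W)"
proof -
  have fW: "finite W" using W V31_fin finite_subset by blast
  have "(\<Sum>x\<in>{1..n}. real (dg W x)) = (\<Sum>x\<in>{1..n}. \<Sum>A\<in>W. if x \<in> A then 1 else 0)"
    unfolding dg_def by (intro sum.cong refl cardP fW)
  also have "\<dots> = (\<Sum>A\<in>W. \<Sum>x\<in>{1..n}. if x \<in> A then 1 else 0)" by (rule sum.swap)
  also have "\<dots> = (\<Sum>A\<in>W. 3)"
  proof (rule sum.cong[OF refl])
    fix A assume "A \<in> W"
    then have A: "A \<subseteq> {1..n}" "card A = 3" using W V31_sub V31_card by auto
    have "(\<Sum>x\<in>{1..n}. if x \<in> A then 1 else (0::real)) = real (card {x\<in>{1..n}. x \<in> A})"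
      by (rule cardP[symmetric]) simp
    also have "{x\<in>{1..n}. x \<in> A} = A" using A by blast
    finally show "(\<Sum>x\<in>{1..n}. if x \<in> A then 1 else (0::real)) = 3" using A by simp
  qed
  also have "\<dots> = 3 * real (card W)" by simp
  finally show ?thesis .
qed

lemma per_x:
  assumes W: "W \<subseteq> V31 n"
  shows "(\<Sum>p\<in>W \<times> W. if fst p \<inter> snd p = {x} then 1 else 0) \<ge> real (dg W x)^2 - 2 * real n * real (dg W x)"
proof -
  have fW: "finite W" using W V31_fin finite_subset by blast
  define Wx where "Wx = {A\<in>W. x \<in> A}"
  have fWx: "finite Wx" unfolding Wx_def using fW by simp
  define P1 where "P1 p = (x \<in> fst p \<and> x \<in> snd p)" for p :: "nat set \<times> nat set"
  define P2 where "P2 p = (x \<in> fst p \<and> x \<in> snd p \<and> fst p \<inter> snd p \<noteq> {x})" for p :: "nat set \<times> nat set"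
  have "(\<Sum>p\<in>W \<times> W. if fst p \<inter> snd p = {x} then 1 else 0) \<ge>
        (\<Sum>p\<in>W \<times> W. (if P1 p then 1 else 0) - (if P2 p then 1 else (0::real)))"
    by (rule sum_mono) (auto simp: P1_def P2_def)
  also have "(\<Sum>p\<in>W \<times> W. (if P1 p then 1 else 0) - (if P2 p then 1 else (0::real))) =
      real (card {p\<in>W \<times> W. P1 p}) - real (card {p\<in>W \<times> W. P2 p})"
    by (simp add: sum_subtractf cardP fW)
  also have "{p\<in>W \<times> W. P1 p} = Wx \<times> Wx" unfolding P1_def Wx_def by auto
  also have "card (Wx \<times> Wx) = dg W x * dg W x" unfolding Wx_def dg_def by (simp add: card_cartesian_product)
  finally have 1: "(\<Sum>p\<in>W \<times> W. if fst p \<inter> snd p = {x} then 1 else 0) \<ge>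
      real (dg W x * dg W x) - real (card {p\<in>W \<times> W. P2 p})" .
  have "{p\<in>W \<times> W. P2 p} \<subseteq> Sigma Wx (\<lambda>A. {B \<in> V31 n. x \<in> B \<and> A \<inter> B \<noteq> {x}})"
    unfolding P2_def Wx_def using W by auto
  moreover have "finite (Sigma Wx (\<lambda>A. {B \<in> V31 n. x \<in> B \<and> A \<inter> B \<noteq> {x}}))"
    using fWx V31_fin by simp
  ultimately have "card {p\<in>W \<times> W. P2 p} \<le> card (Sigma Wx (\<lambda>A. {B \<in> V31 n. x \<in> B \<and> A \<inter> B \<noteq> {x}}))"
    by (rule card_mono[rotated])
  also have "\<dots> = (\<Sum>A\<in>Wx. card {B \<in> V31 n. x \<in> B \<and> A \<inter> B \<noteq> {x}})"
    using fWx V31_fin by simp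
  also have "\<dots> \<le> (\<Sum>A\<in>Wx. 2 * n)"
  proof (rule sum_mono)
    fix A assume "A \<in> Wx"
    then have "A \<in> V31 n" "x \<in> A" unfolding Wx_def using W by auto
    then show "card {B \<in> V31 n. x \<in> B \<and> A \<inter> B \<noteq> {x}} \<le> 2 * n" by (rule bad_card)
  qed
  also have "\<dots> = dg W x * (2 * n)" unfolding Wx_def dg_def by simp
  finally have "real (card {p\<in>W \<times> W. P2 p}) \<le> real (dg W x * (2 * n))" by (simp only: of_nat_le_iff)
  then show ?thesis using 1 by (simp add: power2_eq_square algebra_simps)
qed

lemma r_lower:
  assumes W: "W \<subseteq> V31 n" and n: "n > 0"
  shows "real (card (Eo W)) \<ge> 9 * real (card W)^2 / real n - 6 * real n * real (card W)"
proof -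
  have fW: "finite W" using W V31_fin finite_subset by blast
  let ?l = "real (card W)"
  have "real (card (Eo W)) = (\<Sum>p\<in>W \<times> W. if adj31 (fst p) (snd p) then 1 else 0)"
    unfolding Eo_def by (rule cardP) (simp add: fW)
  also have "\<dots> = (\<Sum>p\<in>W \<times> W. \<Sum>x\<in>{1..n}. if fst p \<inter> snd p = {x} then 1 else 0)"
  proof (rule sum.cong[OF refl])
    fix p assume "p \<in> W \<times> W"
    then have "fst p \<in> V31 n" "snd p \<in> V31 n" using W by auto
    then show "(if adj31 (fst p) (snd p) then 1 else 0) = (\<Sum>x\<in>{1..n}. if fst p \<inter> snd p = {x} then 1 else (0::real))"
      by (rule adj_sum)
  qed
  also have "\<dots> = (\<Sum>x\<in>{1..n}. \<Sum>p\<in>W \<times> W. if fst p \<inter> snd p = {x} then 1 else 0)" by (rule sum.swap)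
  also have "\<dots> \<ge> (\<Sum>x\<in>{1..n}. real (dg W x)^2 - 2 * real n * real (dg W x))"
    by (rule sum_mono) (rule per_x[OF W])
  finally have 0: "real (card (Eo W)) \<ge> (\<Sum>x\<in>{1..n}. real (dg W x)^2 - 2 * real n * real (dg W x))" .
  have "(\<Sum>x\<in>{1..n}. real (dg W x)^2 - 2 * real n * real (dg W x)) = (\<Sum>x\<in>{1..n}. real (dg W x)^2) - 2 * real n * (3 * ?l)"
    by (simp only: sum_subtractf sum_distrib_left[symmetric] sum_deg[OF W])
  then have 1: "real (card (Eo W)) \<ge> (\<Sum>x\<in>{1..n}. real (dg W x)^2) - 2 * real n * (3 * ?l)" using 0 by simp
  have "(3 * ?l)^2 \<le> real n * (\<Sum>x\<in>{1..n}. real (dg W x)^2)"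
    using cs_sum[of "{1..n}" "\<lambda>x. real (dg W x)"] sum_deg[OF W] by simp
  then have "9 * ?l^2 / real n \<le> (\<Sum>x\<in>{1..n}. real (dg W x)^2)"
    using n by (simp add: field_simps power_mult_distrib)
  then show ?thesis using 1 by simp
qed



lemma grp_idx:
  fixes s k i :: nat
  assumes "s > 0" "k \<in> {i*s+1..i*s+s}"
  shows "(k - 1) div s = i"
proof (rule div_nat_eqI)
  show "s * i \<le> k - 1" using assms by (auto simp: algebra_simps)
  show "k - 1 < s * Suc i" using assms by (auto simp: algebra_simps)
qed

lemma fin_subsets: "finite A \<Longrightarrow> finite {P. P \<subseteq> A \<and> Q P}"
  by (rule finite_subset[of _ "Pow A"]) auto

lemma construct:
  assumes s: "s > 0" and l: "l \<le> (n div s) * (s choose 3)"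
  shows "\<exists>W. W \<subseteq> V31 n \<and> card W = l \<and> 4 * rW31 W \<le> 3 * l * s * s"
proof -
  define m where "m = n div s"
  define G where "G i = {i*s+1..i*s+s}" for i
  define Ti where "Ti i = {A. A \<subseteq> G i \<and> card A = 3}" for i
  define W0 where "W0 = (\<Union>i\<in>{..<m}. Ti i)"
  have cG: "card (G i) = s" for i unfolding G_def by simp
  have fG: "finite (G i)" for i unfolding G_def by simp
  have fT: "finite (Ti i)" for i unfolding Ti_def by (rule fin_subsets[OF fG])
  have cT: "card (Ti i) = s choose 3" for i unfolding Ti_def using n_subsets[OF fG, of i 3] cG by simp
  have same: "i = j" if "k \<in> G i" "k \<in> G j" for i j k
    using grp_idx[OF s, of k i] grp_idx[OF s, of k j] that unfolding G_def by simp
  have disj: "Ti i \<inter> Ti j = {}" if "i \<noteq> j" for i j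
  proof (rule ccontr)
    assume "Ti i \<inter> Ti j \<noteq> {}"
    then obtain A where A: "A \<subseteq> G i" "A \<subseteq> G j" "card A = 3" unfolding Ti_def by blast
    then obtain k where "k \<in> A" by (metis card.empty ex_in_conv zero_neq_numeral)
    then show False using same[of k i j] A that by blast
  qed
  have cW0: "card W0 = m * (s choose 3)" unfolding W0_def
    by (subst card_UN_disjoint) (auto simp: fT cT disj)
  have mn: "m * s \<le> n" unfolding m_def by (simp add: div_times_less_eq_dividend)
  have Gsub: "G i \<subseteq> {1..n}" if "i < m" for i
  proof -
    have "i * s + s \<le> m * s" using that by (metis Suc_leI mult_Suc mult_le_mono1 add.commute)
    then show ?thesis unfolding G_def using mn by auto
  qed
  have W0V: "W0 \<subseteq> V31 n" unfolding W0_def Ti_def V31_def using Gsub by blast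
  obtain W where W: "W \<subseteq> W0" "card W = l" using l cW0 m_def by (metis obtain_subset_with_card_n)
  have WV: "W \<subseteq> V31 n" using W W0V by blast
  have fW: "finite W" using WV V31_fin finite_subset by blast
  have nb: "card {B\<in>W. adj31 A B} \<le> 3 * (s choose 2)" if A: "A \<in> W" for A
  proof -
    obtain i where i: "i < m" "A \<subseteq> G i" "card A = 3" using A W unfolding W0_def Ti_def by blast
    have fA: "finite A" using i(3) by (auto intro: card_ge_0_finite)
    have "{B\<in>W. adj31 A B} \<subseteq> (\<Union>a\<in>A. insert a ` {P. P \<subseteq> G i \<and> card P = 2})"
    proof
      fix B assume B: "B \<in> {B\<in>W. adj31 A B}"
      then obtain j where j: "B \<subseteq> G j" "card B = 3" using W unfolding W0_def Ti_def by blast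
      obtain a where a: "A \<inter> B = {a}" using B unfolding adj31_def by (auto simp: card_1_singleton_iff)
      have "a \<in> A" "a \<in> B" using a by blast+
      then have "a \<in> G i" "a \<in> G j" using i(2) j(1) by blast+
      then have "j = i" using same by blast
      have e: "B = insert a (B - {a})" using \<open>a \<in> B\<close> by blast
      have "B - {a} \<subseteq> G i" using j \<open>j = i\<close> by blast
      moreover have "card (B - {a}) = 2" using j \<open>a \<in> B\<close> by (simp add: card_Diff_singleton_if)
      ultimately have "B - {a} \<in> {P. P \<subseteq> G i \<and> card P = 2}" by simp
      then have "insert a (B - {a}) \<in> insert a ` {P. P \<subseteq> G i \<and> card P = 2}" by (rule imageI)
      then have "B \<in> insert a ` {P. P \<subseteq> G i \<and> card P = 2}" using e by simp
      then show "B \<in> (\<Union>a\<in>A. insert a ` {P. P \<subseteq> G i \<and> card P = 2})" by (rule UN_I[OF \<open>a \<in> A\<close>])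
    qed
    then have "card {B\<in>W. adj31 A B} \<le> card (\<Union>a\<in>A. insert a ` {P. P \<subseteq> G i \<and> card P = 2})"
      by (rule card_mono[rotated]) (simp add: fA fin_subsets[OF fG])
    also have "\<dots> \<le> (\<Sum>a\<in>A. card (insert a ` {P. P \<subseteq> G i \<and> card P = 2}))" by (rule card_UN_le[OF fA])
    also have "\<dots> \<le> (\<Sum>a\<in>A. s choose 2)"
    proof (rule sum_mono)
      fix a assume "a \<in> A"
      have "card (insert a ` {P. P \<subseteq> G i \<and> card P = 2}) \<le> card {P. P \<subseteq> G i \<and> card P = 2}"
        by (rule card_image_le) (rule fin_subsets[OF fG])
      also have "\<dots> = s choose 2" using n_subsets[OF fG, of i 2] cG by simp
      finally show "card (insert a ` {P. P \<subseteq> G i \<and> card P = 2}) \<le> s choose 2" .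
    qed
    also have "\<dots> = 3 * (s choose 2)" using i(3) by simp
    finally show ?thesis .
  qed
  have "Eo W = Sigma W (\<lambda>A. {B\<in>W. adj31 A B})" unfolding Eo_def by auto
  then have "card (Eo W) = (\<Sum>A\<in>W. card {B\<in>W. adj31 A B})" using fW by simp
  also have "\<dots> \<le> (\<Sum>A\<in>W. 3 * (s choose 2))" by (rule sum_mono) (rule nb)
  also have "\<dots> = l * (3 * (s choose 2))" using W by simp
  finally have h1: "2 * rW31 W \<le> l * (3 * (s choose 2))" using Eo_card[OF WV] by simp
  have "2 * (s * (s - 1) div 2) \<le> s * (s - 1)" by (rule times_div_less_eq_dividend)
  also have "s * (s - 1) \<le> s * s" by simp
  finally have h2: "2 * (s choose 2) \<le> s * s" by (simp add: choose_two)
  have h3: "l * (2 * (s choose 2)) \<le> l * (s * s)" using h2 by (rule mult_le_mono2)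
  have "4 * rW31 W \<le> 3 * (l * (2 * (s choose 2)))" using h1 by simp
  also have "\<dots> \<le> 3 * (l * (s * s))" using h3 by simp
  finally have "4 * rW31 W \<le> 3 * l * s * s" by (simp add: mult.assoc)
  then show ?thesis using WV W by blast
qed



lemma choose2_real: "real (s choose 2) = real s * (real s - 1) / 2"
proof (induction s)
  case 0 then show ?case by simp
next
  case (Suc s)
  have "Suc s choose 2 = (s choose 1) + (s choose 2)" by (simp add: numeral_2_eq_2)
  then show ?case using Suc by (simp add: field_simps)
qed

lemma choose3_real: "real (s choose 3) = real s * (real s - 1) * (real s - 2) / 6"
proof (induction s)
  case 0 then show ?case by simp
next
  case (Suc s)
  have "Suc s choose 3 = (s choose 2) + (s choose 3)" by (simp add: numeral_3_eq_3 numeral_2_eq_2)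
  then show ?case using Suc choose2_real[of s] by (simp add: field_simps)
qed

lemma r31_props:
  assumes "\<exists>W. W \<subseteq> V31 n \<and> card W = l"
  shows "(\<forall>W. W \<subseteq> V31 n \<and> card W = l \<longrightarrow> r31 n l \<le> rW31 W) \<and> (\<exists>W. W \<subseteq> V31 n \<and> card W = l \<and> r31 n l = rW31 W)"
proof -
  let ?R = "{rW31 W | W. W \<subseteq> V31 n \<and> card W = l}"
  have "?R \<subseteq> rW31 ` Pow (V31 n)" by blast
  then have fR: "finite ?R" by (rule finite_subset) (simp add: V31_fin)
  have ne: "?R \<noteq> {}" using assms by blast
  have 1: "r31 n l \<le> rW31 W" if "W \<subseteq> V31 n" "card W = l" for W
    unfolding r31_def by (rule Min_le[OF fR]) (use that in blast)
  have "r31 n l \<in> ?R" unfolding r31_def by (rule Min_in[OF fR ne])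
  then show ?thesis using 1 by blast
qed

lemma pt:
  fixes n l :: nat
  assumes n: "n \<ge> 200" and lo: "10000 * real n ^ 2 \<le> real l" and hi: "real l * 100000 \<le> real n ^ 3"
  shows "real l ^ 2 / real (alpha31 n) \<le> real (r31 n l) \<and>
         real (r31 n l) \<le> 5 * real l ^ 2 / real (alpha31 n) \<and>
         real n \<le> 5 * real l ^ 2 / real (alpha31 n)"
proof -
  define N where "N = real n"
  define L where "L = real l"
  have N: "N \<ge> 200" using n unfolding N_def by simp
  have LN: "10000 * N^2 \<le> L" "L * 100000 \<le> N^3" using lo hi unfolding N_def L_def by auto
  have "N^2 > 0" using N by simp
  then have Lpos: "L > 0" using LN(1) by linarith
  define t where "t = sqrt (13 * L / (2 * N))"
  have nn: "13 * L / (2 * N) \<ge> 0" using Lpos N by (intro divide_nonneg_nonneg) auto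
  then have t2: "t^2 = 13 * L / (2 * N)" unfolding t_def by (rule real_sqrt_pow2)
  have t0: "t \<ge> 0" unfolding t_def using nn by simp
  have "13 * L / (2 * N) \<ge> 200^2"
  proof -
    have "13 * L \<ge> 13 * 10000 * N^2" using LN(1) by simp
    moreover have "13 * 10000 * N^2 \<ge> 200^2 * (2 * N)" using N by (simp add: power2_eq_square)
    ultimately show ?thesis using N by (simp add: field_simps)
  qed
  then have t200: "t \<ge> 200" unfolding t_def by (intro real_le_rsqrt) simp
  have "t^2 \<le> (N/100)^2"
  proof -
    have "13 * L * 100000 \<le> 13 * N^3" using LN(2) by simp
    then have "13 * L / (2 * N) \<le> N^2 / 10000" using N Lpos by (simp add: field_simps power2_eq_square power3_eq_cube)
    then show ?thesis using t2 by (simp add: power_divide)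
  qed
  then have tN: "t \<le> N/100" by (rule power2_le_imp_le) (use N in simp)
  define s where "s = nat \<lceil>t\<rceil>"
  have "0 \<le> \<lceil>t\<rceil>" using t0 by simp
  then have sc: "real s = of_int \<lceil>t\<rceil>" unfolding s_def by simp
  have s1: "t \<le> real s" unfolding sc by (rule le_of_int_ceiling)
  have s2: "real s < t + 1" unfolding sc using ceiling_correct[of t] by linarith
  have spos: "s > 0" using s1 t200 by linarith
  have cap: "l \<le> (n div s) * (s choose 3)"
  proof -
    have "n < (n div s) * s + s" using div_mult_mod_eq[of n s] mod_less_divisor[OF spos, of n] by linarith
    then have "real n < real ((n div s) * s + s)" by (simp only: of_nat_less_iff)
    then have d1: "real (n div s) * real s \<ge> N - real s" unfolding N_def by simp
    have a1: "N - real s \<ge> 98/100 * N" using s2 tN N by linarith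
    have a2: "real s - 1 \<ge> 99/100 * t" "real s - 2 \<ge> 99/100 * t" using s1 t200 by linarith+
    have "(real s - 1) * (real s - 2) \<ge> (99/100 * t) * (99/100 * t)"
      using a2 t0 by (intro mult_mono) auto
    then have b: "(real s - 1) * (real s - 2) \<ge> 9801/10000 * t^2" by (simp add: power2_eq_square)
    have "(N - real s) * ((real s - 1) * (real s - 2)) \<ge> (98/100 * N) * (9801/10000 * t^2)"
      by (rule mult_mono[OF a1 b]) (use a1 N in auto)
    moreover have "(98/100 * N) * (9801/10000 * t^2) \<ge> 6 * L"
    proof -
      have e1: "N * t^2 = 13 * L / 2" using t2 N by (simp add: field_simps)
      have "(98/100 * N) * (9801/10000 * t^2) = (98/100 * (9801/10000)) * (N * t^2)" by (simp only: ac_simps)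
      also have "\<dots> = (98/100 * (9801/10000)) * (13 * L / 2)" by (simp only: e1)
      finally show ?thesis using Lpos by linarith
    qed
    moreover have "real ((n div s) * (s choose 3)) * 6 \<ge> (N - real s) * ((real s - 1) * (real s - 2))"
    proof -
      have "real ((n div s) * (s choose 3)) * 6 = (real (n div s) * real s) * ((real s - 1) * (real s - 2))"
        by (simp add: choose3_real)
      also have "\<dots> \<ge> (N - real s) * ((real s - 1) * (real s - 2))"
      proof -
        have "0 \<le> 9801/10000 * t^2" by simp
        then have "0 \<le> (real s - 1) * (real s - 2)" using b by linarith
        then show ?thesis by (rule mult_right_mono[OF d1])
      qed
      finally show ?thesis .
    qed
    ultimately have "real ((n div s) * (s choose 3)) \<ge> L" by linarith
    then show ?thesis unfolding L_def by (simp only: of_nat_le_iff)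
  qed
  obtain W where W: "W \<subseteq> V31 n" "card W = l" "4 * rW31 W \<le> 3 * l * s * s"
    using construct[OF spos cap] by blast
  have rp: "(\<forall>W. W \<subseteq> V31 n \<and> card W = l \<longrightarrow> r31 n l \<le> rW31 W) \<and> (\<exists>W. W \<subseteq> V31 n \<and> card W = l \<and> r31 n l = rW31 W)"
    using W by (intro r31_props) blast
  define al where "al = real (alpha31 n)"
  have al1: "al \<le> N" unfolding al_def N_def using alpha_le by simp
  have al2: "al \<ge> N / 4"
  proof -
    have "3 * (n div 3) + 2 \<ge> n" by linarith
    then have "real (3 * (n div 3) + 2) \<ge> real n" by (simp only: of_nat_le_iff)
    then have "3 * real (n div 3) + 2 \<ge> N" unfolding N_def by simp
    moreover have "real (n div 3) \<le> al" unfolding al_def using alpha_ge by simp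
    ultimately show ?thesis using N by linarith
  qed
  have alpos: "al > 0" using al2 N by linarith
  have up: "real (r31 n l) \<le> 5 * L^2 / N"
  proof -
    have "real (r31 n l) \<le> real (rW31 W)" using rp W by simp
    also have "\<dots> \<le> 3 * L * (real s)^2 / 4"
    proof -
      have "real (4 * rW31 W) \<le> real (3 * l * s * s)" using W(3) by (simp only: of_nat_le_iff)
      then have "4 * real (rW31 W) \<le> 3 * L * (real s * real s)" unfolding L_def by simp
      then show ?thesis by (simp add: power2_eq_square)
    qed
    also have "\<dots> \<le> 3 * L * ((40/39) * t^2) / 4"
    proof -
      have "real s \<le> t + 1" using s2 by simp
      then have "(real s)^2 \<le> (t+1)^2" by (rule power_mono) simp
      moreover have "(t+1)^2 \<le> (40/39) * t^2"
      proof -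
        have "t * t \<ge> 200 * t" using t0 by (rule mult_right_mono[OF t200])
        moreover have "(t+1)^2 = t*t + 2*t + 1" by (simp add: power2_eq_square algebra_simps)
        moreover have "40/39 * t^2 = 40/39*(t*t)" by (simp add: power2_eq_square)
        ultimately show ?thesis using t200 by linarith
      qed
      ultimately have "(real s)^2 \<le> (40/39) * t^2" by linarith
      then have "3 * L * (real s)^2 \<le> 3 * L * ((40/39) * t^2)" by (rule mult_left_mono) (use Lpos in simp)
      then show ?thesis by (rule divide_right_mono) simp
    qed
    also have "\<dots> = 5 * L^2 / N" using t2 N by (simp add: field_simps power2_eq_square)
    finally show ?thesis .
  qed
  have up2: "5 * L^2 / N \<le> 5 * L^2 / al" using al1 alpos Lpos by (intro divide_left_mono) auto
  obtain W' where W': "W' \<subseteq> V31 n" "card W' = l" "r31 n l = rW31 W'" using rp by blast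
  have low: "L^2 / al \<le> real (r31 n l)"
  proof -
    have "2 * real (rW31 W') = real (card (Eo W'))" using Eo_card[OF W'(1)] by simp
    also have "\<dots> \<ge> 9 * L^2 / N - 6 * N * L" using r_lower[OF W'(1)] N W'(2) unfolding N_def L_def by simp
    finally have 1: "2 * real (r31 n l) \<ge> 9 * L^2 / N - 6 * N * L" using W'(3) by simp
    have "L^2 / al \<le> L^2 / (N/4)" using al2 N by (intro divide_left_mono) auto
    also have "\<dots> = 4 * L^2 / N" by simp
    finally have 2: "L^2 / al \<le> 4 * L^2 / N" .
    have "6 * N * L \<le> L^2 / N"
    proof -
      have "6 * N^2 \<le> L" using LN(1) zero_le_power2[of N] by linarith
      then have "6 * N^2 * L \<le> L * L" by (rule mult_right_mono) (use Lpos in simp)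
      then show ?thesis using N by (simp add: field_simps power2_eq_square)
    qed
    then show ?thesis using 1 2 by (simp add: field_simps)
  qed
  have big: "N \<le> 5 * L^2 / N"
  proof -
    have "1 * N \<le> N * N" by (rule mult_right_mono) (use N in auto)
    moreover have "N^2 = N * N" by (simp add: power2_eq_square)
    ultimately have "N \<le> L" using LN(1) N by linarith
    then have "N * N \<le> L * L" by (rule mult_mono) (use N \<open>N \<le> L\<close> in auto)
    then have "N * N \<le> 5 * (L * L)" using zero_le_square[of L] by linarith
    then have "N * N \<le> 5 * L^2" by (simp add: power2_eq_square)
    then show ?thesis using N by (simp add: pos_le_divide_eq)
  qed
  show ?thesis using low up up2 big unfolding N_def L_def al_def by linarith
qed



theorem theorem1:
  fixes f g l :: "nat \<Rightarrow> nat"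
  assumes "(\<lambda>n. real n ^ 2) \<in> o(\<lambda>n. real (f n))"
    and "(\<lambda>n. real (g n)) \<in> o(\<lambda>n. real n ^ 3)"
    and "\<And>n. f n \<le> l n \<and> l n \<le> g n"
  shows "\<exists>h :: nat \<Rightarrow> nat.
           (\<lambda>n. real (h n)) \<sim>[at_top] (\<lambda>n. 5 * real (l n) ^ 2 / real (alpha31 n)) \<and>
           (\<forall>\<^sub>F n in at_top.
              real (l n) ^ 2 / real (alpha31 n) \<le> real (r31 n (l n)) \<and>
              r31 n (l n) \<le> h n)"
proof -
  define X where "X n = 5 * real (l n) ^ 2 / real (alpha31 n)" for n
  define h where "h n = nat \<lceil>X n\<rceil>" for n
  have e1: "\<forall>\<^sub>F n in at_top. norm (real n ^ 2) \<le> (1/10000) * norm (real (f n))"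
    by (rule landau_o.smallD[OF assms(1)]) simp
  have e2: "\<forall>\<^sub>F n in at_top. norm (real (g n)) \<le> (1/100000) * norm (real n ^ 3)"
    by (rule landau_o.smallD[OF assms(2)]) simp
  have e3: "\<forall>\<^sub>F n in at_top. (200::nat) \<le> n" by simp
  have ev: "\<forall>\<^sub>F n in at_top. real n \<le> X n \<and> real (l n) ^ 2 / real (alpha31 n) \<le> real (r31 n (l n)) \<and> real (r31 n (l n)) \<le> X n"
    using e1 e2 e3
  proof eventually_elim
    case (elim n)
    have "10000 * real n ^ 2 \<le> real (f n)" using elim(1) by simp
    also have "\<dots> \<le> real (l n)" using assms(3)[of n] by simp
    finally have lo: "10000 * real n ^ 2 \<le> real (l n)" .
    have "real (l n) \<le> real (g n)" using assms(3)[of n] by simp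
    also have "\<dots> \<le> real n ^ 3 / 100000" using elim(2) by simp
    finally have hi: "real (l n) * 100000 \<le> real n ^ 3" by simp
    show ?case using pt[OF elim(3) lo hi] unfolding X_def by blast
  qed
  have hX: "X n \<le> real (h n) \<and> real (h n) \<le> X n + 1" if "0 \<le> X n" for n
  proof -
    have "real (h n) = of_int \<lceil>X n\<rceil>" unfolding h_def using that by simp
    then show ?thesis using ceiling_correct[of "X n"] by linarith
  qed
  have part2: "\<forall>\<^sub>F n in at_top. real (l n) ^ 2 / real (alpha31 n) \<le> real (r31 n (l n)) \<and> r31 n (l n) \<le> h n"
    using ev e3
  proof eventually_elim
    case (elim n)
    then have "0 \<le> X n" by linarith
    then have "real (r31 n (l n)) \<le> real (h n)" using hX[of n] elim by linarith
    then show ?case using elim by simp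
  qed
  have lim: "((\<lambda>n. real (h n) / X n) \<longlongrightarrow> 1) at_top"
  proof (rule real_tendsto_sandwich[where f="\<lambda>_. 1" and h="\<lambda>n. 1 + 1 / real n"])
    show "\<forall>\<^sub>F n in at_top. 1 \<le> real (h n) / X n"
      using ev e3
    proof eventually_elim
      case (elim n)
      then have "X n > 0" by linarith
      then show ?case using hX[of n] by simp
    qed
    show "\<forall>\<^sub>F n in at_top. real (h n) / X n \<le> 1 + 1 / real n"
      using ev e3
    proof eventually_elim
      case (elim n)
      then have Xp: "X n > 0" "real n > 0" by linarith+
      have "real (h n) / X n \<le> (X n + 1) / X n" using hX[of n] Xp by (intro divide_right_mono) auto
      also have "\<dots> = 1 + 1 / X n" using Xp by (simp add: field_simps)
      also have "1 / X n \<le> 1 / real n" using Xp elim by (intro divide_left_mono) auto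
      finally show ?case by simp
    qed
    show "((\<lambda>_. 1::real) \<longlongrightarrow> 1) at_top" by simp
    have "((\<lambda>n. 1 + 1 / real n) \<longlongrightarrow> 1 + 0) sequentially"
      by (intro tendsto_add tendsto_const lim_1_over_n)
    then show "((\<lambda>n. 1 + 1 / real n) \<longlongrightarrow> 1) at_top" by simp
  qed
  have "(\<lambda>n. real (h n)) \<sim>[at_top] X" by (rule asymp_equivI'[OF lim])
  then have "(\<lambda>n. real (h n)) \<sim>[at_top] (\<lambda>n. 5 * real (l n) ^ 2 / real (alpha31 n))"
    unfolding X_def by simp
  then show ?thesis using part2 by blast
qed

end
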